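(* Let $\tau\in\{1,\dots,c\}$ with $\tau\le c/2$, and let $0<x_L<x_H<1$ with $x^*-x_L=x_H-x^*$. Consider the two-price policy with parameters $x_L,x_H,\tau$ and its steady-state distribution $\pi$, and set $\varsigma_L=\frac{1}{\pi_0}\sum_{j=1}^\tau\pi_j$, $\varsigma_H=\frac1{\pi_0}\sum_{j=\tau+1}^c\pi_j$. Then $$\varsigma_L\ge\Big(1-\frac{\tau^2}{2c}\Big)\frac{(x^*/x_L)^\tau-1}{1-x_L/x^*},\qquad \varsigma_L-\varsigma_H\le\frac{(x^*/x_L)^\tau}{1-x_L/x^*}\Big(\frac{2\tau^2}{c}+(x^*/x_H)^\tau\Big).$$
   Context: Setting. Fix $c\in\mathbb N$ (number of identical units of a single reusable resource), an arrival rate $\lambda>0$ and a mean usage duration $d>0$, with $x^*:=c/(\lambda d)\in(0,1)$. A stock-dependent policy is a vector $\mathbf x=(x_1,\dots,x_c)\in[0,1]^c$, where $x_j$ is the admission probability used when exactly $j$ units are available. Its steady-state distribution is the unique probability vector $\pi=(\pi_0,\dots,\pi_c)$ satisfying $\pi_j\lambda x_j=\pi_{j-1}(c-j+1)/d$ for all $j\in\{1,\dots,c\}$. A two-price policy with parameters $x_L,x_H\in[0,1]$ and $\tau\in\{1,\dots,c\}$ sets $x_j=x_L$ for $1\le j\le\tau$ and $x_j=x_H$ for $\tau<j\le c$. *)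

theory Defs
  imports Complex_Main
begin

definition xstar :: "nat \<Rightarrow> real \<Rightarrow> real \<Rightarrow> real" where
  "xstar c lam d = real c / (lam * d)"

definition is_steady_state ::
  "nat \<Rightarrow> real \<Rightarrow> real \<Rightarrow> (nat \<Rightarrow> real) \<Rightarrow> (nat \<Rightarrow> real) \<Rightarrow> bool" where
  "is_steady_state c lam d x \<pi> \<longleftrightarrow>
     (\<forall>j\<in>{0..c}. 0 \<le> \<pi> j) \<and> (\<Sum>j=0..c. \<pi> j) = 1 \<and>
     (\<forall>j\<in>{1..c}. \<pi> j * lam * x j = \<pi> (j - 1) * (real c - real j + 1) / d)"

definition two_price :: "nat \<Rightarrow> real \<Rightarrow> real \<Rightarrow> nat \<Rightarrow> nat \<Rightarrow> real" where
  "two_price c xL xH \<tau> j = (if j \<le> \<tau> then xL else xH)"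

end

theory Submission
  imports Defs
begin

lemma geom_aux:
  fixes r :: real assumes "r \<noteq> 0"
  shows "(\<Sum>j=1..n. r^j) * (1 - 1/r) = r^n - 1"
proof (induction n)
  case 0 then show ?case by simp
next
  case (Suc n)
  have "(\<Sum>j=1..Suc n. r^j) = (\<Sum>j=1..n. r^j) + r^Suc n" by simp
  then have "(\<Sum>j=1..Suc n. r^j) * (1 - 1/r) = (r^n - 1) + r^Suc n * (1 - 1/r)"
    using Suc by (simp add: distrib_right)
  also have "\<dots> = r^Suc n - 1" using assms by (simp add: field_simps)
  finally show ?case .
qed

lemma prodP:
  fixes c j :: nat assumes "j \<le> c" "c \<ge> 1"
  shows "0 \<le> (\<Prod>i<j. 1 - real i / c) \<and> (\<Prod>i<j. 1 - real i / c) \<le> 1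
     \<and> 1 - real j^2/(2*c) \<le> (\<Prod>i<j. 1 - real i / c)"
  using assms(1)
proof (induction j)
  case 0 then show ?case by simp
next
  case (Suc j)
  define P where "P = (\<Prod>i<j. 1 - real i / c)"
  have IH: "0 \<le> P" "P \<le> 1" "1 - real j^2/(2*c) \<le> P" using Suc by (auto simp: P_def)
  have cp: "real c > 0" using assms(2) by simp
  have f0: "0 \<le> 1 - real j / c" "1 - real j / c \<le> 1" using Suc.prems cp by (auto simp: field_simps)
  have e: "(\<Prod>i<Suc j. 1 - real i / c) = P * (1 - real j / c)" by (simp add: P_def)
  have "P * (1 - real j / c) = P - P * (real j / c)" by (simp add: algebra_simps)
  also have "\<dots> \<ge> P - real j / c"
  proof -
    have "P * (real j / c) \<le> 1 * (real j / c)" using IH cp by (intro mult_right_mono) auto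
    then show ?thesis by simp
  qed
  finally have lo: "P * (1 - real j / c) \<ge> P - real j / c" .
  have "1 - real (Suc j)^2/(2*c) \<le> 1 - real j^2/(2*c) - real j / c"
    using cp by (simp add: field_simps power2_eq_square)
  then have "1 - real (Suc j)^2/(2*c) \<le> P * (1 - real j / c)" using lo IH by linarith
  moreover have "0 \<le> P * (1 - real j / c)" using IH f0 by simp
  moreover have "P * (1 - real j / c) \<le> 1" using IH f0 by (simp add: mult_le_one)
  ultimately show ?case unfolding e by blast
qed

theorem lemma2:
  fixes c \<tau> :: nat and lam d xL xH :: real and \<pi> :: "nat \<Rightarrow> real"
  assumes c_pos: "c \<ge> 1"
    and lam_pos: "lam > 0" and d_pos: "d > 0"
    and xstar_range: "0 < xstar c lam d" "xstar c lam d < 1"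
    and tau_range: "\<tau> \<in> {1..c}" and tau_half: "real \<tau> \<le> real c / 2"
    and xL_pos: "0 < xL" and xL_lt_xH: "xL < xH" and xH_lt1: "xH < 1"
    and symm: "xstar c lam d - xL = xH - xstar c lam d"
    and ss: "is_steady_state c lam d (two_price c xL xH \<tau>) \<pi>"
  shows "(\<Sum>j=1..\<tau>. \<pi> j) / \<pi> 0 \<ge>
           (1 - real \<tau> ^ 2 / (2 * real c)) *
           (((xstar c lam d / xL) ^ \<tau> - 1) / (1 - xL / xstar c lam d))
       \<and> (\<Sum>j=1..\<tau>. \<pi> j) / \<pi> 0 - (\<Sum>j=\<tau>+1..c. \<pi> j) / \<pi> 0 \<le>
           ((xstar c lam d / xL) ^ \<tau> / (1 - xL / xstar c lam d)) *
           (2 * real \<tau> ^ 2 / real c + (xstar c lam d / xH) ^ \<tau>)"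
proof -
  define a where "a = xstar c lam d"
  define x where "x = two_price c xL xH \<tau>"
  have a_eq: "a = real c / (lam*d)" by (simp add: a_def xstar_def)
  have aL: "xL < a" and aH: "a < xH" using symm xL_lt_xH unfolding a_def by linarith+
  have apos: "a > 0" using aL xL_pos by simp
  have xpos: "\<And>j. x j > 0" using xL_pos xL_lt_xH by (simp add: x_def two_price_def)
  have cp: "real c > 0" using c_pos by simp
  from ss have nn: "\<forall>j\<in>{0..c}. 0 \<le> \<pi> j" and s1: "(\<Sum>j=0..c. \<pi> j) = 1"
    and rc: "\<forall>j\<in>{1..c}. \<pi> j * lam * x j = \<pi> (j-1) * (real c - real j + 1)/d"
    unfolding is_steady_state_def x_def by auto
  have rec: "\<pi> (Suc j) = \<pi> j * (a * (1 - real j / c) / x (Suc j))" if "Suc j \<le> c" for j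
  proof -
    have h: "\<pi> (Suc j) * lam * x (Suc j) = \<pi> j * (real c - real (Suc j) + 1)/d"
      using rc that by force
    have "\<pi> (Suc j) = \<pi> j * (real c - real (Suc j) + 1)/(d * lam * x (Suc j))"
      using h xpos[of "Suc j"] lam_pos d_pos by (simp add: field_simps)
    also have "\<dots> = \<pi> j * (a * (1 - real j / c) / x (Suc j))"
      using xpos[of "Suc j"] lam_pos d_pos cp by (simp add: a_eq field_simps)
    finally show ?thesis .
  qed
  define g where "g j = (\<Prod>i<j. a * (1 - real i / c) / x (Suc i))" for j
  have closed: "\<pi> j = \<pi> 0 * g j" if "j \<le> c" for j using that
  proof (induction j)
    case 0 then show ?case by (simp add: g_def)
  next
    case (Suc j)
    then have "\<pi> j = \<pi> 0 * g j" by simp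
    then show ?case using rec[OF Suc.prems] by (simp add: g_def)
  qed
  have pi0: "\<pi> 0 > 0"
  proof (rule ccontr)
    assume "\<not> \<pi> 0 > 0" then have "\<pi> 0 = 0" using nn by force
    then have "\<forall>j\<in>{0..c}. \<pi> j = 0" using closed by (metis atLeastAtMost_iff mult_zero_left)
    then have "(\<Sum>j=0..c. \<pi> j) = 0" by simp
    with s1 show False by simp
  qed
  have gnn: "g j \<ge> 0" if "j \<le> c" for j
  proof -
    have "\<pi> j \<ge> 0" using nn that by auto
    then have "\<pi> 0 * g j \<ge> 0" using closed[OF that] by simp
    then show ?thesis using pi0 by (simp add: zero_le_mult_iff)
  qed
  define P where "P j = (\<Prod>i<j. 1 - real i / real c)" for j
  have Pb: "0 \<le> P j" "P j \<le> 1" "1 - real j^2/(2*c) \<le> P j" if "j \<le> c" for j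
    using prodP[OF that c_pos] by (auto simp: P_def)
  define rL where "rL = a/xL"
  define rH where "rH = a/xH"
  have gsplit: "g j = (\<Prod>i<j. a / x (Suc i)) * P j" for j
  proof -
    have "(\<Prod>i<j. a / x (Suc i)) * P j = (\<Prod>i<j. a / x (Suc i) * (1 - real i / real c))"
      unfolding P_def by (rule prod.distrib[symmetric])
    also have "\<dots> = g j" unfolding g_def by (rule prod.cong) auto
    finally show ?thesis by simp
  qed
  have Q1: "(\<Prod>i<j. a / x (Suc i)) = rL^j" if "j \<le> \<tau>" for j
  proof -
    have "(\<Prod>i<j. a / x (Suc i)) = (\<Prod>i<j. rL)"
      by (rule prod.cong) (use that in \<open>auto simp: x_def two_price_def rL_def\<close>)
    then show ?thesis by simp
  qed
  have Q2: "(\<Prod>i<\<tau>+k. a / x (Suc i)) = rL^\<tau> * rH^k" for k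
  proof (induction k)
    case 0 then show ?case using Q1 by simp
  next
    case (Suc k)
    have "x (Suc (\<tau>+k)) = xH" by (simp add: x_def two_price_def)
    then show ?case using Suc by (simp add: rH_def)
  qed
  have tau1: "1 \<le> \<tau>" "\<tau> \<le> c" using tau_range by auto
  have tau2: "2*\<tau> \<le> c" using tau_half by linarith
  have gL: "g j = rL^j * P j" if "j \<le> \<tau>" for j using gsplit Q1[OF that] by simp
  have gH: "g (\<tau>+k) = rL^\<tau> * rH^k * P (\<tau>+k)" for k using gsplit Q2 by simp
  have SL_eq: "(\<Sum>j=1..\<tau>. \<pi> j) / \<pi> 0 = (\<Sum>j=1..\<tau>. g j)"
    unfolding sum_divide_distrib
  proof (rule sum.cong)
    fix j assume "j \<in> {1..\<tau>}"
    then have "j \<le> c" using tau1 by auto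
    then show "\<pi> j / \<pi> 0 = g j" using closed[of j] pi0 by simp
  qed simp
  have SH_eq: "(\<Sum>j=\<tau>+1..c. \<pi> j) / \<pi> 0 = (\<Sum>j=\<tau>+1..c. g j)"
    unfolding sum_divide_distrib
  proof (rule sum.cong)
    fix j assume "j \<in> {\<tau>+1..c}"
    then have "j \<le> c" by auto
    then show "\<pi> j / \<pi> 0 = g j" using closed[of j] pi0 by simp
  qed simp
  define R where "R = rL^\<tau>"
  define D where "D = 1 - xL/a"
  define t where "t = rH^\<tau>"
  have D_pos: "D > 0" using aL apos by (simp add: D_def field_simps)
  have rLpos: "rL > 0" using apos xL_pos by (simp add: rL_def)
  have rHpos: "rH > 0" using apos aH by (simp add: rH_def)
  have Rpos: "R > 0" using rLpos by (simp add: R_def)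
  have tpos: "t > 0" using rHpos by (simp add: t_def)
  have geoL: "(\<Sum>j=1..\<tau>. rL^j) = (R - 1)/D"
  proof -
    have "(\<Sum>j=1..\<tau>. rL^j) * D = R - 1"
      using geom_aux[of rL \<tau>] rLpos apos xL_pos by (simp add: D_def R_def rL_def)
    then show ?thesis using D_pos by (simp add: field_simps)
  qed
  have geoH: "(\<Sum>j=1..\<tau>. rH^j) = (1 - t)/D"
  proof -
    have hx: "xH = 2*a - xL" using symm unfolding a_def by simp
    have e: "1 - 1/rH = - D" using apos unfolding D_def rH_def hx
      by (simp add: field_simps)
    have "(\<Sum>j=1..\<tau>. rH^j) * (- D) = t - 1"
      using geom_aux[of rH \<tau>] rHpos e by (simp add: t_def)
    then show ?thesis using D_pos by (simp add: field_simps)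
  qed
  have part1: "(\<Sum>j=1..\<tau>. g j) \<ge> (1 - real \<tau> ^ 2 / (2 * real c)) * ((R - 1)/D)"
  proof -
    have "(\<Sum>j=1..\<tau>. rL^j * (1 - real \<tau> ^ 2 / (2 * real c))) \<le> (\<Sum>j=1..\<tau>. g j)"
    proof (rule sum_mono)
      fix j assume j: "j \<in> {1..\<tau>}"
      then have jc: "j \<le> c" using tau1 by auto
      have "real j^2 \<le> real \<tau>^2" using j by (simp add: power_mono)
      then have "1 - real \<tau> ^ 2 / (2 * real c) \<le> 1 - real j^2/(2*c)" using cp
        by (simp add: divide_right_mono)
      also have "\<dots> \<le> P j" using Pb(3)[OF jc] .
      finally have "rL^j * (1 - real \<tau> ^ 2 / (2 * real c)) \<le> rL^j * P j"
        using rLpos by (intro mult_left_mono) auto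
      then show "rL^j * (1 - real \<tau> ^ 2 / (2 * real c)) \<le> g j" using gL j by simp
    qed
    then have "(\<Sum>j=1..\<tau>. rL^j) * (1 - real \<tau> ^ 2 / (2 * real c)) \<le> (\<Sum>j=1..\<tau>. g j)"
      by (simp add: sum_distrib_right)
    then show ?thesis unfolding geoL by (simp add: mult.commute)
  qed
  have part2a: "(\<Sum>j=1..\<tau>. g j) \<le> (R - 1)/D"
  proof -
    have "(\<Sum>j=1..\<tau>. g j) \<le> (\<Sum>j=1..\<tau>. rL^j)"
    proof (rule sum_mono)
      fix j assume j: "j \<in> {1..\<tau>}"
      then have jc: "j \<le> c" using tau1 by auto
      have "rL^j * P j \<le> rL^j * 1" using Pb(2)[OF jc] rLpos by (intro mult_left_mono) auto
      then show "g j \<le> rL^j" using gL j by simp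
    qed
    then show ?thesis using geoL by simp
  qed
  have SH_ge: "(\<Sum>j=\<tau>+1..c. g j) \<ge> (\<Sum>k=1..\<tau>. g (\<tau>+k))"
  proof -
    have "(\<Sum>j=\<tau>+1..c. g j) \<ge> (\<Sum>j=1+\<tau>..\<tau>+\<tau>. g j)"
      by (rule sum_mono2) (use tau2 gnn in auto)
    also have "(\<Sum>j=1+\<tau>..\<tau>+\<tau>. g j) = (\<Sum>k=1..\<tau>. g (k+\<tau>))"
      by (rule sum.shift_bounds_cl_nat_ivl)
    finally show ?thesis by (simp add: add.commute)
  qed
  define q where "q = 1 - 2 * real \<tau> ^ 2 / real c"
  have SH_lb: "(\<Sum>j=\<tau>+1..c. g j) \<ge> R * q * ((1 - t)/D)" if q0: "q \<ge> 0"
  proof -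
    have "(\<Sum>k=1..\<tau>. R * q * rH^k) \<le> (\<Sum>k=1..\<tau>. g (\<tau>+k))"
    proof (rule sum_mono)
      fix k assume k: "k \<in> {1..\<tau>}"
      then have kc: "\<tau>+k \<le> c" using tau2 by auto
      have "real (\<tau>+k)^2 \<le> real (2*\<tau>)^2" using k by (intro power_mono) auto
      then have "real (\<tau>+k)^2/(2*real c) \<le> real (2*\<tau>)^2/(2*real c)"
        by (rule divide_right_mono) (use cp in auto)
      also have "real (2*\<tau>)^2/(2*real c) = 2 * real \<tau> ^ 2 / real c"
        using cp by (simp add: field_simps power2_eq_square)
      finally have h1: "real (\<tau>+k)^2/(2*real c) \<le> 2 * real \<tau> ^ 2 / real c" .
      have h2: "1 - real (\<tau>+k)^2/(2*real c) \<le> P (\<tau>+k)" using Pb(3)[OF kc] by simp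
      have "q \<le> P (\<tau>+k)" using h1 h2 unfolding q_def by linarith
      then have "R * rH^k * q \<le> R * rH^k * P (\<tau>+k)"
        using Rpos rHpos by (intro mult_left_mono) auto
      then show "R * q * rH^k \<le> g (\<tau>+k)" using gH by (simp add: R_def mult_ac)
    qed
    then have "R * q * (\<Sum>k=1..\<tau>. rH^k) \<le> (\<Sum>k=1..\<tau>. g (\<tau>+k))"
      by (simp add: sum_distrib_left)
    then show ?thesis using SH_ge geoH by simp
  qed
  have SH_nn: "(\<Sum>j=\<tau>+1..c. g j) \<ge> 0" by (rule sum_nonneg) (use gnn in auto)
  have final2: "(\<Sum>j=1..\<tau>. g j) - (\<Sum>j=\<tau>+1..c. g j) \<le> R / D * (2 * real \<tau> ^ 2 / real c + t)"
  proof (cases "q \<ge> 0")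
    case True
    have q1: "q \<le> 1" using cp by (simp add: q_def)
    have "(\<Sum>j=1..\<tau>. g j) - (\<Sum>j=\<tau>+1..c. g j) \<le> (R - 1)/D - R * q * ((1 - t)/D)"
      using part2a SH_lb[OF True] by linarith
    also have "\<dots> = (R - 1 - R*q*(1-t)) / D" using D_pos by (simp add: field_simps)
    also have "\<dots> \<le> (R * (1 - q + t)) / D"
    proof (rule divide_right_mono)
      have "R*t*q \<le> R*t*1" using q1 Rpos tpos by (intro mult_left_mono) auto
      then show "R - 1 - R*q*(1-t) \<le> R * (1 - q + t)" by (simp add: algebra_simps)
    qed (use D_pos in simp)
    also have "\<dots> = R / D * (2 * real \<tau> ^ 2 / real c + t)" by (simp add: q_def)
    finally show ?thesis .
  next
    case False
    have "(\<Sum>j=1..\<tau>. g j) - (\<Sum>j=\<tau>+1..c. g j) \<le> (R - 1)/D" using part2a SH_nn by linarith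
    also have "\<dots> \<le> R/D * 1" using D_pos by (simp add: divide_right_mono)
    also have "\<dots> \<le> R / D * (2 * real \<tau> ^ 2 / real c + t)"
      using False tpos Rpos D_pos by (intro mult_left_mono) (auto simp: q_def)
    finally show ?thesis .
  qed
  show ?thesis
    using part1 final2 unfolding SL_eq SH_eq R_def D_def t_def rL_def rH_def a_def
    by simp
qed

end
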